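(* For every directed space $X$, there is the equality $\vec{\mathrm{Sp}}(\vec{\Omega}(X))=X$. Consequently the category of directed spaces is isomorphic to a full reflective subcategory of the category of multipointed $d$-spaces.
   Context: Let $\mathbf{Top}$ be the category of $\Delta$-generated spaces (or of $\Delta$-Hausdorff $\Delta$-generated spaces). For $\ell>0$ let $\mu_\ell(t)=t/\ell$, $\mu_\ell:[0,\ell]\to[0,1]$. $\mathcal{M}(\ell,\ell')$ is the set of non-decreasing surjective continuous maps $[0,\ell]\to[0,\ell']$; $\mathcal{I}(\ell)$ is the set of non-decreasing continuous maps $[0,1]\to[0,\ell]$ (constant maps allowed). The Moore composition of $\gamma_1:[0,\ell_1]\to U$, $\gamma_2:[0,\ell_2]\to U$ with $\gamma_1(\ell_1)=\gamma_2(0)$ is $\gamma_1*\gamma_2:[0,\ell_1+\ell_2]\to U$, equal to $\gamma_1(t)$ on $[0,\ell_1]$ and $\gamma_2(t-\ell_1)$ on $[\ell_1,\ell_1+\ell_2]$; the normalized composition of $\gamma_1,\gamma_2:[0,1]\to U$ is $(\gamma_1\mu_{1/2})*(\gamma_2\mu_{1/2})$. A multipointed $d$-space is a triple $X=(|X|,X^0,\mathbb{P}^{\mathrm{top}}X)$: a space, a subset of states, and a set of continuous maps $[0,1]\to|X|$ (execution paths) with endpoints in $X^0$, closed under precomposition by $\mathcal{M}(1,1)$ and under normalized composition; maps are continuous maps preserving states and execution paths. A directed space is a pair $Y=(|Y|,d(Y))$ with $d(Y)$ a set of continuous maps $[0,1]\to|Y|$ containing all constant paths, closed under normalized composition and under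 precomposition by $\mathcal{I}(1)$; morphisms are continuous maps preserving directed paths. $\vec{\mathrm{Sp}}$ sends a multipointed $d$-space $X$ to the directed space $(|X|,d(X))$ where $d(X)$ consists of all constant paths and all Moore compositions $(\gamma_1\phi_1\mu_{\ell_1})*\dots*(\gamma_n\phi_n\mu_{\ell_n})$ with $n\ge1$, $\ell_i>0$, $\sum\ell_i=1$, $\gamma_i$ execution paths and $\phi_i\in\mathcal{I}(1)$. $\vec{\Omega}$ sends a directed space $(|Y|,d(Y))$ to the multipointed $d$-space $(|Y|,|Y|,d(Y))$. $\vec{\mathrm{Sp}}$ is left adjoint to $\vec{\Omega}$, both acting as identity on underlying maps. *)

theory Defs
  imports "HOL-Analysis.Analysis" "HOL-Homology.Simplices"
begin

definition delta_generated :: "'a topology \<Rightarrow> bool" where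
  "delta_generated X \<longleftrightarrow>
     (\<forall>U. U \<subseteq> topspace X \<longrightarrow>
        (openin X U \<longleftrightarrow>
          (\<forall>p \<sigma>. continuous_map (subtopology (powertop_real UNIV) (standard_simplex p)) X \<sigma> \<longrightarrow>
             openin (subtopology (powertop_real UNIV) (standard_simplex p))
                    {x \<in> standard_simplex p. \<sigma> x \<in> U})))"

text \<open>Paths are functions functions real => a; only their values on [0,1] matter.\<close>

definition path_on :: "'a topology \<Rightarrow> (real \<Rightarrow> 'a) \<Rightarrow> bool" where
  "path_on X \<gamma> \<longleftrightarrow> continuous_map (top_of_set {0..1}) X \<gamma>"

definition reparam_I :: "(real \<Rightarrow> real) \<Rightarrow> bool" where
  "reparam_I \<phi> \<longleftrightarrow> continuous_on {0..1} \<phi> \<and> \<phi> ` {0..1} \<subseteq> {0..1} \<and> mono_on {0..1} \<phi>"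

definition reparam_M :: "(real \<Rightarrow> real) \<Rightarrow> bool" where
  "reparam_M \<phi> \<longleftrightarrow> continuous_on {0..1} \<phi> \<and> \<phi> ` {0..1} = {0..1} \<and> mono_on {0..1} \<phi>"

definition norm_comp :: "(real \<Rightarrow> 'a) \<Rightarrow> (real \<Rightarrow> 'a) \<Rightarrow> (real \<Rightarrow> 'a)" where
  "norm_comp \<gamma>1 \<gamma>2 = (\<lambda>t. if t \<le> 1/2 then \<gamma>1 (2 * t) else \<gamma>2 (2 * t - 1))"

definition ext01 :: "(real \<Rightarrow> 'a) set \<Rightarrow> bool" where
  "ext01 P \<longleftrightarrow> (\<forall>\<gamma> \<delta>. \<gamma> \<in> P \<longrightarrow> (\<forall>t\<in>{0..1}. \<delta> t = \<gamma> t) \<longrightarrow> \<delta> \<in> P)"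

record 'a dspace =
  dtop :: "'a topology"
  dpaths :: "(real \<Rightarrow> 'a) set"

record 'a mdspace =
  mtop :: "'a topology"
  mstates :: "'a set"
  mpaths :: "(real \<Rightarrow> 'a) set"

definition is_dspace :: "'a dspace \<Rightarrow> bool" where
  "is_dspace Y \<longleftrightarrow>
     delta_generated (dtop Y) \<and>
     ext01 (dpaths Y) \<and>
     (\<forall>\<gamma>\<in>dpaths Y. path_on (dtop Y) \<gamma>) \<and>
     (\<forall>x\<in>topspace (dtop Y). (\<lambda>t. x) \<in> dpaths Y) \<and>
     (\<forall>\<gamma>1\<in>dpaths Y. \<forall>\<gamma>2\<in>dpaths Y. \<gamma>1 1 = \<gamma>2 0 \<longrightarrow> norm_comp \<gamma>1 \<gamma>2 \<in> dpaths Y) \<and>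
     (\<forall>\<gamma>\<in>dpaths Y. \<forall>\<phi>. reparam_I \<phi> \<longrightarrow> \<gamma> \<circ> \<phi> \<in> dpaths Y)"

definition is_mdspace :: "'a mdspace \<Rightarrow> bool" where
  "is_mdspace X \<longleftrightarrow>
     delta_generated (mtop X) \<and>
     mstates X \<subseteq> topspace (mtop X) \<and>
     ext01 (mpaths X) \<and>
     (\<forall>\<gamma>\<in>mpaths X. path_on (mtop X) \<gamma> \<and> \<gamma> 0 \<in> mstates X \<and> \<gamma> 1 \<in> mstates X) \<and>
     (\<forall>\<gamma>1\<in>mpaths X. \<forall>\<gamma>2\<in>mpaths X. \<gamma>1 1 = \<gamma>2 0 \<longrightarrow> norm_comp \<gamma>1 \<gamma>2 \<in> mpaths X) \<and>
     (\<forall>\<gamma>\<in>mpaths X. \<forall>\<phi>. reparam_M \<phi> \<longrightarrow> \<gamma> \<circ> \<phi> \<in> mpaths X)"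

definition dspace_map :: "'a dspace \<Rightarrow> 'b dspace \<Rightarrow> ('a \<Rightarrow> 'b) \<Rightarrow> bool" where
  "dspace_map Y Y' f \<longleftrightarrow> continuous_map (dtop Y) (dtop Y') f \<and>
     (\<forall>\<gamma>\<in>dpaths Y. f \<circ> \<gamma> \<in> dpaths Y')"

definition mdspace_map :: "'a mdspace \<Rightarrow> 'b mdspace \<Rightarrow> ('a \<Rightarrow> 'b) \<Rightarrow> bool" where
  "mdspace_map X X' f \<longleftrightarrow> continuous_map (mtop X) (mtop X') f \<and>
     f ` mstates X \<subseteq> mstates X' \<and>
     (\<forall>\<gamma>\<in>mpaths X. f \<circ> \<gamma> \<in> mpaths X')"

definition is_moore_comp :: "(real \<Rightarrow> 'a) set \<Rightarrow> (real \<Rightarrow> 'a) \<Rightarrow> bool" where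
  "is_moore_comp P \<delta> \<longleftrightarrow>
     (\<exists>(n::nat) (l::nat \<Rightarrow> real) (\<gamma>::nat \<Rightarrow> real \<Rightarrow> 'a) (\<phi>::nat \<Rightarrow> real \<Rightarrow> real).
        n \<ge> 1 \<and>
        (\<forall>i<n. l i > 0) \<and> (\<Sum>i<n. l i) = 1 \<and>
        (\<forall>i<n. \<gamma> i \<in> P \<and> reparam_I (\<phi> i)) \<and>
        (\<forall>i. Suc i < n \<longrightarrow> \<gamma> i (\<phi> i 1) = \<gamma> (Suc i) (\<phi> (Suc i) 0)) \<and>
        (\<forall>i<n. \<forall>t. (\<Sum>j<i. l j) \<le> t \<and> t \<le> (\<Sum>j<i. l j) + l i \<longrightarrow>
              \<delta> t = \<gamma> i (\<phi> i ((t - (\<Sum>j<i. l j)) / l i))))"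

definition Sp :: "'a mdspace \<Rightarrow> 'a dspace" where
  "Sp X = \<lparr> dtop = mtop X,
            dpaths = {\<delta>. (\<exists>x\<in>topspace (mtop X). \<forall>t\<in>{0..1}. \<delta> t = x)
                         \<or> is_moore_comp (mpaths X) \<delta>} \<rparr>"

definition Omega :: "'a dspace \<Rightarrow> 'a mdspace" where
  "Omega Y = \<lparr> mtop = dtop Y, mstates = topspace (dtop Y), mpaths = dpaths Y \<rparr>"

end

theory Submission
  imports Defs
begin

lemma two_piece:
  assumes Y: "is_dspace Y" and A: "\<alpha> \<in> dpaths Y" and B: "\<beta> \<in> dpaths Y"
    and e: "\<alpha> 1 = \<beta> 0" and a: "0 < a" "a < 1"
    and d1: "\<And>t. 0 \<le> t \<Longrightarrow> t \<le> a \<Longrightarrow> \<delta> t = \<alpha> (t / a)"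
    and d2: "\<And>t. a \<le> t \<Longrightarrow> t \<le> 1 \<Longrightarrow> \<delta> t = \<beta> ((t - a) / (1 - a))"
  shows "\<delta> \<in> dpaths Y"
proof -
  define \<psi> where "\<psi> = (\<lambda>t::real. if t \<le> a then t / (2*a) else 1/2 + (t - a) / (2*(1-a)))"
  have nc: "norm_comp \<alpha> \<beta> \<in> dpaths Y" using Y A B e unfolding is_dspace_def by blast
  have cont: "continuous_on {0..1} \<psi>"
    unfolding \<psi>_def
    by (rule continuous_on_cases_le) (use a in \<open>auto intro!: continuous_intros\<close>)
  have mono: "mono_on {0..1} \<psi>"
  proof (rule mono_onI)
    fix r s :: real assume "r \<in> {0..1}" "s \<in> {0..1}" "r \<le> s"
    have m1: "r \<le> a \<Longrightarrow> r / (2*a) \<le> 1/2" using a \<open>r \<in> {0..1}\<close> by (simp add: divide_simps)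
    have m2: "a \<le> s \<Longrightarrow> 0 \<le> (s - a) / (2*(1-a))" using a by (simp add: divide_simps)
    moreover have "\<And>x y. x \<le> y \<Longrightarrow> x / (2*a) \<le> y / (2*a)" using a by (simp add: divide_simps)
    moreover have "\<And>x y. x \<le> y \<Longrightarrow> (x - a) / (2*(1-a)) \<le> (y - a) / (2*(1-a))" using a by (simp add: divide_simps)
    ultimately show "\<psi> r \<le> \<psi> s" unfolding \<psi>_def
      using \<open>r \<le> s\<close> m1 m2 by (cases "r \<le> a"; cases "s \<le> a") (auto simp del: times_divide_eq_right divide_le_eq_1 intro: order_trans)
  qed
  have img: "\<psi> ` {0..1} \<subseteq> {0..1}"
    using a unfolding \<psi>_def by (auto simp: divide_simps)
  have "reparam_I \<psi>" unfolding reparam_I_def using cont mono img by blast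
  then have c: "norm_comp \<alpha> \<beta> \<circ> \<psi> \<in> dpaths Y" using nc Y unfolding is_dspace_def by blast
  have "\<forall>t\<in>{0..1}. \<delta> t = (norm_comp \<alpha> \<beta> \<circ> \<psi>) t"
  proof
    fix t :: real assume t: "t \<in> {0..1}"
    show "\<delta> t = (norm_comp \<alpha> \<beta> \<circ> \<psi>) t"
    proof (cases "t \<le> a")
      case True
      then have "\<psi> t \<le> 1/2" using a t unfolding \<psi>_def by (auto simp: divide_simps)
      moreover have "2 * \<psi> t = t / a" using True a unfolding \<psi>_def by auto
      ultimately show ?thesis using d1[of t] True t unfolding norm_comp_def by auto
    next
      case False
      then have "\<not> \<psi> t \<le> 1/2" using a t unfolding \<psi>_def by (auto simp: divide_simps)
      moreover have "2 * \<psi> t - 1 = (t - a) / (1 - a)" using False a unfolding \<psi>_def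
        by (auto simp: field_simps)
      ultimately show ?thesis using d2[of t] False t unfolding norm_comp_def by auto
    qed
  qed
  then show ?thesis using c Y unfolding is_dspace_def ext01_def by blast
qed

lemma moore_in:
  fixes n :: nat
  assumes Y: "is_dspace Y"
  shows "\<And>l \<delta>. n \<ge> 1 \<Longrightarrow> (\<forall>i<n. l i > (0::real)) \<Longrightarrow> (\<Sum>i<n. l i) = 1 \<Longrightarrow>
        (\<forall>i<n. \<gamma> i \<in> dpaths Y \<and> reparam_I (\<phi> i)) \<Longrightarrow>
        (\<forall>i<n. \<forall>t. (\<Sum>j<i. l j) \<le> t \<and> t \<le> (\<Sum>j<i. l j) + l i \<longrightarrow>
              \<delta> t = \<gamma> i (\<phi> i ((t - (\<Sum>j<i. l j)) / l i))) \<Longrightarrow> \<delta> \<in> dpaths Y"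
proof (induction n)
  case 0
  then show ?case by simp
next
  case (Suc n)
  have gp: "\<And>i. i < Suc n \<Longrightarrow> \<gamma> i \<circ> \<phi> i \<in> dpaths Y"
    using Suc.prems(4) Y unfolding is_dspace_def by blast
  show ?case
  proof (cases "n = 0")
    case True
    then have l0: "l 0 = 1" using Suc.prems(3) by simp
    have "\<forall>t\<in>{0..1}. \<delta> t = (\<gamma> 0 \<circ> \<phi> 0) t"
      using Suc.prems(5) True l0 by auto
    then show ?thesis using gp[of 0] Y unfolding is_dspace_def ext01_def by blast
  next
    case False
    define L where "L = (\<Sum>i<n. l i)"
    have Lpos: "L > 0" unfolding L_def using False Suc.prems(2)
      by (intro sum_pos) auto
    have sumS: "L + l n = 1" using Suc.prems(3) unfolding L_def by simp
    have ln: "l n > 0" using Suc.prems(2) by simp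
    have L1: "L < 1" using sumS ln by simp
    define l' where "l' = (\<lambda>i. l i / L)"
    define \<delta>' where "\<delta>' = (\<lambda>s. \<delta> (L * s))"
    have sl': "\<And>i. (\<Sum>j<i. l' j) = (\<Sum>j<i. l j) / L"
      unfolding l'_def by (simp add: sum_divide_distrib)
    have IH: "\<delta>' \<in> dpaths Y"
    proof (rule Suc.IH)
      show "1 \<le> n" using False by simp
      show "\<forall>i<n. 0 < l' i" using Suc.prems(2) Lpos unfolding l'_def by auto
      show "(\<Sum>i<n. l' i) = 1" using sl'[of n] Lpos unfolding L_def by simp
      show "\<forall>i<n. \<gamma> i \<in> dpaths Y \<and> reparam_I (\<phi> i)" using Suc.prems(4) by auto
      show "\<forall>i<n. \<forall>t. (\<Sum>j<i. l' j) \<le> t \<and> t \<le> (\<Sum>j<i. l' j) + l' i \<longrightarrow>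
              \<delta>' t = \<gamma> i (\<phi> i ((t - (\<Sum>j<i. l' j)) / l' i))"
      proof (intro allI impI)
        fix i t assume i: "i < n" and h: "(\<Sum>j<i. l' j) \<le> t \<and> t \<le> (\<Sum>j<i. l' j) + l' i"
        have h2: "(\<Sum>j<i. l j) \<le> L * t \<and> L * t \<le> (\<Sum>j<i. l j) + l i"
        proof -
          have h': "(\<Sum>j<i. l j) / L \<le> t \<and> t \<le> ((\<Sum>j<i. l j) + l i) / L"
            using h unfolding sl' by (simp add: l'_def add_divide_distrib)
          then show ?thesis using Lpos by (simp add: pos_divide_le_eq pos_le_divide_eq mult.commute)
        qed
        have li: "l i > 0" using i Suc.prems(2) by simp
        have "\<delta>' t = \<gamma> i (\<phi> i ((L * t - (\<Sum>j<i. l j)) / l i))"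
          unfolding \<delta>'_def using Suc.prems(5) i h2 by simp
        also have "(L * t - (\<Sum>j<i. l j)) / l i = (t - (\<Sum>j<i. l' j)) / l' i"
          using Lpos li by (simp add: l'_def sum_divide_distrib[symmetric] field_simps)
        finally show "\<delta>' t = \<gamma> i (\<phi> i ((t - (\<Sum>j<i. l' j)) / l' i))" .
      qed
    qed
    have dn: "\<And>t. L \<le> t \<Longrightarrow> t \<le> 1 \<Longrightarrow> \<delta> t = (\<gamma> n \<circ> \<phi> n) ((t - L) / (1 - L))"
    proof -
      fix t assume t: "L \<le> t" "t \<le> 1"
      have e: "1 - L = l n" using sumS by simp
      have "\<delta> t = \<gamma> n (\<phi> n ((t - L) / l n))"
        using Suc.prems(5)[rule_format, of n t] t sumS unfolding L_def by simp
      then show "\<delta> t = (\<gamma> n \<circ> \<phi> n) ((t - L) / (1 - L))"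
        by (simp only: e comp_apply)
    qed
    show ?thesis
    proof (rule two_piece[OF Y IH gp[of n] _ Lpos L1])
      show "\<delta>' 1 = (\<gamma> n \<circ> \<phi> n) 0" unfolding \<delta>'_def using dn[of L] L1 by simp
      show "\<And>t. 0 \<le> t \<Longrightarrow> t \<le> L \<Longrightarrow> \<delta> t = \<delta>' (t / L)"
        unfolding \<delta>'_def using Lpos by simp
      show "\<And>t. L \<le> t \<Longrightarrow> t \<le> 1 \<Longrightarrow> \<delta> t = (\<gamma> n \<circ> \<phi> n) ((t - L) / (1 - L))"
        by (rule dn)
    qed simp
  qed
qed

lemma part1:
  assumes Y: "is_dspace Y"
  shows "Sp (Omega Y) = Y"
proof -
  have "dpaths (Sp (Omega Y)) = dpaths Y"
  proof (intro equalityI subsetI)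
    fix \<delta> assume "\<delta> \<in> dpaths (Sp (Omega Y))"
    then have "(\<exists>x\<in>topspace (dtop Y). \<forall>t\<in>{0..1}. \<delta> t = x) \<or> is_moore_comp (dpaths Y) \<delta>"
      unfolding Sp_def Omega_def by simp
    then show "\<delta> \<in> dpaths Y"
    proof
      assume "\<exists>x\<in>topspace (dtop Y). \<forall>t\<in>{0..1}. \<delta> t = x"
      then obtain x where "x \<in> topspace (dtop Y)" "\<forall>t\<in>{0..1}. \<delta> t = x" by blast
      then show ?thesis using Y unfolding is_dspace_def ext01_def by metis
    next
      assume "is_moore_comp (dpaths Y) \<delta>"
      then obtain n l \<gamma> \<phi> where m: "(n::nat) \<ge> 1" "\<forall>i<n. l i > (0::real)" "(\<Sum>i<n. l i) = 1"
        "\<forall>i<n. \<gamma> i \<in> dpaths Y \<and> reparam_I (\<phi> i)"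
        "\<forall>i<n. \<forall>t. (\<Sum>j<i. l j) \<le> t \<and> t \<le> (\<Sum>j<i. l j) + l i \<longrightarrow>
              \<delta> t = \<gamma> i (\<phi> i ((t - (\<Sum>j<i. l j)) / l i))"
        unfolding is_moore_comp_def by (elim exE conjE) blast
      show ?thesis by (rule moore_in[OF Y m])
    qed
  next
    fix \<delta> assume d: "\<delta> \<in> dpaths Y"
    have r: "reparam_I (\<lambda>t. t)" unfolding reparam_I_def
      by (auto intro: continuous_intros mono_onI)
    have "is_moore_comp (dpaths Y) \<delta>"
      unfolding is_moore_comp_def
      apply (rule exI[of _ 1], rule exI[of _ "\<lambda>_. 1"], rule exI[of _ "\<lambda>_. \<delta>"],
             rule exI[of _ "\<lambda>_ t. t"])
      using d r by auto
    then show "\<delta> \<in> dpaths (Sp (Omega Y))" unfolding Sp_def Omega_def by simp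
  qed
  moreover have "dtop (Sp (Omega Y)) = dtop Y" unfolding Sp_def Omega_def by simp
  ultimately show ?thesis by (intro dspace.equality) (auto simp: Sp_def)
qed

theorem theorem3p6:
  shows "(\<forall>Y :: 'a dspace. is_dspace Y \<longrightarrow> Sp (Omega Y) = Y) \<and>
         (\<forall>(Y :: 'a dspace) (Y' :: 'b dspace) f. is_dspace Y \<longrightarrow> is_dspace Y' \<longrightarrow>
             (mdspace_map (Omega Y) (Omega Y') f \<longleftrightarrow> dspace_map Y Y' f))"
proof (intro conjI allI impI)
  fix Y :: "'a dspace" assume "is_dspace Y" then show "Sp (Omega Y) = Y" by (rule part1)
next
  fix Y :: "'a dspace" and Y' :: "'b dspace" and f
  show "mdspace_map (Omega Y) (Omega Y') f \<longleftrightarrow> dspace_map Y Y' f"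
    unfolding mdspace_map_def dspace_map_def Omega_def
    by (auto dest: continuous_map_image_subset_topspace)
qed

end
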